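(* Let $A\subseteq\mathbb{R}^d$ be a connected open set and $B\subseteq\mathbb{R}^d$ a bounded open set with $C^1$ boundary such that $\partial B\subseteq A$ and such that the boundary of each connected component of $B$ is connected. Then $A\setminus\overline B$ is connected. *)

theory Defs
  imports "HOL-Analysis.Analysis"
begin

definition C1_fun :: "('a::euclidean_space \<Rightarrow> real) \<Rightarrow> bool" where
  "C1_fun h \<longleftrightarrow> (\<exists>G :: 'a \<Rightarrow> 'a.
      (\<forall>x. (h has_derivative (\<lambda>v. G x \<bullet> v)) (at x)) \<and> continuous_on UNIV G)"

text \<open>An open set B has C^1 boundary: near every boundary point p, after a choice of
  orthonormal coordinates whose last axis is the unit vector n, B is the region below
  the graph of a C^1 function of the remaining coordinates. The graph function is
  encoded as a C^1 function h on the whole space that is constant along n,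
  i.e. h x depends only on the orthogonal projection of x onto the hyperplane orthogonal to n.\<close>
definition C1_boundary :: "'a::euclidean_space set \<Rightarrow> bool" where
  "C1_boundary B \<longleftrightarrow>
     (\<forall>p\<in>frontier B. \<exists>U n h.
        open U \<and> p \<in> U \<and> norm n = 1 \<and> C1_fun h \<and>
        (\<forall>x. h x = h (x - (x \<bullet> n) *\<^sub>R n)) \<and>
        B \<inter> U = {x \<in> U. x \<bullet> n < h x})"

end

theory Submission
  imports Defs
begin

lemma conn_lemma:
  fixes S T :: "'a::real_normed_vector set"
  assumes "convex T" "T \<noteq> {}" "T \<subseteq> S" "\<forall>x\<in>S. \<exists>y\<in>T. closed_segment x y \<subseteq> S"
  shows "connected S"
proof -
  obtain y0 where y0: "y0 \<in> T" using assms(2) by blast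
  have cc: "connected_component S x y0" if "x \<in> S" for x
  proof -
    obtain y where y: "y \<in> T" "closed_segment x y \<subseteq> S" using assms(4) \<open>x\<in>S\<close> by blast
    have "connected (closed_segment x y \<union> T)"
      using y by (intro connected_Un) (auto simp: convex_connected assms(1))
    then show ?thesis unfolding connected_component_def
      using y y0 assms(3) by (intro exI[of _ "closed_segment x y \<union> T"]) auto
  qed
  show ?thesis unfolding connected_iff_connected_component
    by (metis cc connected_component_sym connected_component_trans)
qed

lemma cvx_gt: "w < a \<Longrightarrow> w < b \<Longrightarrow> 0 \<le> (u::real) \<Longrightarrow> u \<le> 1 \<Longrightarrow> w < (1-u)*a + u*b"
  using convex_bound_lt[of "-a" "-w" "-b" "1-u" u] by simp

lemma cvx_lt: "a < w \<Longrightarrow> b < w \<Longrightarrow> 0 \<le> (u::real) \<Longrightarrow> u \<le> 1 \<Longrightarrow> (1-u)*a + u*b < w"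
  using convex_bound_lt[of a w b "1-u" u] by simp

lemma local_nbhd:
  fixes B :: "'a::euclidean_space set"
  assumes oB: "open B" and cb: "C1_boundary B" and pf: "p \<in> frontier B" and oA: "open A" and pA: "p \<in> A"
  shows "\<exists>N. open N \<and> p \<in> N \<and> N \<subseteq> A \<and> connected (N - closure B) \<and> connected (N \<inter> B)
           \<and> N \<inter> frontier B \<subseteq> closure (N - closure B)"
proof -
  obtain U n h where oU: "open U" and pU: "p \<in> U" and n1: "norm n = 1" and C1: "C1_fun h"
    and hinv: "\<forall>x. h x = h (x - (x \<bullet> n) *\<^sub>R n)" and BU: "B \<inter> U = {x \<in> U. x \<bullet> n < h x}"
    using bspec[OF cb[unfolded C1_boundary_def] pf] by (elim exE conjE) (rule that; assumption)
  have cont: "continuous_on UNIV h"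
  proof -
    obtain G where "\<forall>x. (h has_derivative (\<lambda>v. G x \<bullet> v)) (at x)" using C1 unfolding C1_fun_def by blast
    then show ?thesis by (meson continuous_at_imp_continuous_on has_derivative_continuous)
  qed
  have nn: "n \<bullet> n = 1" using n1 by (simp add: norm_eq_1)
  define pr where "pr x = x - (x \<bullet> n) *\<^sub>R n" for x
  have hpr: "h x = h (pr x)" for x unfolding pr_def using hinv by blast
  have prsh: "pr (x + t *\<^sub>R n) = pr x" for x t
    by (simp add: pr_def inner_add_left nn algebra_simps)
  have hsh: "h (x + t *\<^sub>R n) = h x" for x t using hpr prsh by metis
  have clos: "x \<in> closure B \<longleftrightarrow> x \<bullet> n \<le> h x" if xU: "x \<in> U" for x
  proof
    assume "x \<in> closure B"
    then have "x \<in> closure (U \<inter> B)" using open_Int_closure_subset[OF oU] xU by blast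
    also have "\<dots> \<subseteq> closure {x. x \<bullet> n \<le> h x}"
    proof (intro closure_mono subsetI)
      fix y assume "y \<in> U \<inter> B"
      then have "y \<in> {x \<in> U. x \<bullet> n < h x}" using BU by blast
      then show "y \<in> {x. x \<bullet> n \<le> h x}" by simp
    qed
    also have "\<dots> = {x. x \<bullet> n \<le> h x}"
      by (intro closure_closed closed_Collect_le cont) (auto intro: continuous_intros)
    finally show "x \<bullet> n \<le> h x" by simp
  next
    assume le: "x \<bullet> n \<le> h x"
    show "x \<in> closure B" unfolding closure_approachable
    proof (intro allI impI)
      fix e :: real assume e: "e > 0"
      obtain r where r: "r > 0" "ball x r \<subseteq> U" using openE[OF oU xU] by blast
      define t where "t = min e r / 2"
      have t: "t > 0" "t < e" "t < r" using e r by (auto simp: t_def)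
      define y where "y = x + (-t) *\<^sub>R n"
      have dy: "dist y x = t" using t n1 by (simp add: y_def dist_norm)
      have "y \<in> ball x r" using dy t by (simp add: dist_commute)
      then have "y \<in> U" using r by blast
      moreover have "h y = h x" unfolding y_def by (rule hsh)
      moreover have "y \<bullet> n = x \<bullet> n - t" using nn by (simp add: y_def inner_add_left inner_diff_left)
      ultimately have "y \<in> U" "y \<bullet> n < h y" using le t by auto
      then have "y \<in> B" using BU by blast
      then show "\<exists>y\<in>B. dist y x < e" using dy t by auto
    qed
  qed
  have pnB: "p \<notin> B" using pf oB by (simp add: frontier_def interior_open)
  have pcl: "p \<in> closure B" using pf by (simp add: frontier_def)
  define c where "c = p \<bullet> n"
  have pc: "h p = c" using clos[OF pU] pcl pnB BU pU unfolding c_def by force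
  obtain r where r: "r > 0" "ball p r \<subseteq> U \<inter> A"
    using openE[OF open_Int[OF oU oA], of p] pU pA by blast
  define \<epsilon> where "\<epsilon> = r / 2"
  have \<epsilon>: "\<epsilon> > 0" using r by (simp add: \<epsilon>_def)
  obtain \<delta>0 where \<delta>0: "\<delta>0 > 0" "\<forall>y. dist y (pr p) < \<delta>0 \<longrightarrow> dist (h y) (h (pr p)) < \<epsilon>/2"
    using cont \<epsilon> unfolding continuous_on_iff by (metis UNIV_I half_gt_zero)
  define \<delta> where "\<delta> = min \<delta>0 \<epsilon>"
  have \<delta>: "\<delta> > 0" "\<delta> \<le> \<delta>0" "\<delta> \<le> \<epsilon>" using \<delta>0 \<epsilon> by (auto simp: \<delta>_def)
  define N where "N = {x. norm (pr x - pr p) < \<delta>} \<inter> {x. \<bar>x \<bullet> n - c\<bar> < \<epsilon>}"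
  have hN: "\<bar>h x - c\<bar> < \<epsilon>/2" if "x \<in> N" for x
  proof -
    have "dist (pr x) (pr p) < \<delta>0" using that \<delta> by (auto simp: N_def dist_norm)
    then have "dist (h (pr x)) (h (pr p)) < \<epsilon>/2" using \<delta>0 by blast
    then show ?thesis using hpr[of x] hpr[of p] pc by (simp add: dist_real_def)
  qed
  have prlin: "pr (a + b) = pr a + pr b" "pr (u *\<^sub>R a) = u *\<^sub>R pr a" "pr (a - b) = pr a - pr b" for a b u
    by (auto simp: pr_def inner_add_left inner_diff_left algebra_simps)
  have oN: "open N" unfolding N_def pr_def
    by (intro open_Int open_Collect_less) (auto intro!: continuous_intros)
  have pN: "p \<in> N" using \<delta> \<epsilon> by (simp add: N_def c_def)
  have NU: "N \<subseteq> ball p r"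
  proof
    fix x assume x: "x \<in> N"
    have "x - p = (pr x - pr p) + (x \<bullet> n - c) *\<^sub>R n" by (simp add: pr_def c_def algebra_simps)
    then have "norm (x - p) \<le> norm (pr x - pr p) + \<bar>x \<bullet> n - c\<bar>"
      using norm_triangle_ineq[of "pr x - pr p" "(x \<bullet> n - c) *\<^sub>R n"] n1 by simp
    also have "\<dots> < \<delta> + \<epsilon>" using x by (auto simp: N_def)
    also have "\<dots> \<le> r" using \<delta> by (simp add: \<epsilon>_def)
    finally show "x \<in> ball p r" by (simp add: dist_norm norm_minus_commute)
  qed
  then have NsubU: "N \<subseteq> U" and NsubA: "N \<subseteq> A" using r by auto
  have Nplus: "N - closure B = {x \<in> N. x \<bullet> n > h x}" using clos NsubU by force
  have Nminus: "N \<inter> B = {x \<in> N. x \<bullet> n < h x}" using BU NsubU by blast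
  have convslab: "convex (N \<inter> {x. x \<bullet> n = t})" for t
    unfolding convex_def
  proof (intro ballI allI impI)
    fix x y u v assume x: "x \<in> N \<inter> {x. x \<bullet> n = t}" and y: "y \<in> N \<inter> {x. x \<bullet> n = t}"
      and uv: "0 \<le> (u::real)" "0 \<le> v" "u + v = 1"
    have "pr (u *\<^sub>R x + v *\<^sub>R y) - pr p = u *\<^sub>R (pr x - pr p) + v *\<^sub>R (pr y - pr p)"
      using uv by (simp add: prlin algebra_simps) (metis add.commute add_diff_cancel_left' scaleR_collapse)
    then have "norm (pr (u *\<^sub>R x + v *\<^sub>R y) - pr p) \<le> u * norm (pr x - pr p) + v * norm (pr y - pr p)"
      using uv norm_triangle_ineq[of "u *\<^sub>R (pr x - pr p)" "v *\<^sub>R (pr y - pr p)"] by simp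
    also have "\<dots> < \<delta>" using x y uv by (intro convex_bound_lt) (auto simp: N_def)
    finally have "norm (pr (u *\<^sub>R x + v *\<^sub>R y) - pr p) < \<delta>" .
    moreover have "(u *\<^sub>R x + v *\<^sub>R y) \<bullet> n = t" using x y uv
      by (simp add: inner_add_left) (metis distrib_right mult_1)
    ultimately show "u *\<^sub>R x + v *\<^sub>R y \<in> N \<inter> {x. x \<bullet> n = t}" using x \<epsilon> by (auto simp: N_def)
  qed
  have vert: "closed_segment x (x + (t - x \<bullet> n) *\<^sub>R n) \<subseteq> {z \<in> N. P (z \<bullet> n) (h z)}"
    if x: "x \<in> N" "P (x \<bullet> n) (h x)" and t: "\<bar>t - c\<bar> < \<epsilon>" and Pt: "P t (h x)"
      and Pc: "\<And>a b w v. P a w \<Longrightarrow> P b w \<Longrightarrow> 0 \<le> (v::real) \<Longrightarrow> v \<le> 1 \<Longrightarrow> P ((1 - v) * a + v * b) w"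
    for x t P
  proof
    fix z assume "z \<in> closed_segment x (x + (t - x \<bullet> n) *\<^sub>R n)"
    then obtain u where u: "0 \<le> u" "u \<le> 1" "z = (1 - u) *\<^sub>R x + u *\<^sub>R (x + (t - x \<bullet> n) *\<^sub>R n)"
      unfolding in_segment by blast
    then have z: "z = x + (u * (t - x \<bullet> n)) *\<^sub>R n" by (simp add: algebra_simps)
    have zn: "z \<bullet> n = (1-u) * (x \<bullet> n) + u * t" by (subst z) (simp add: inner_add_left nn algebra_simps)
    have "\<bar>(1-u) * (x \<bullet> n) + u * t - c\<bar> < \<epsilon>"
    proof -
      have "(1-u) * (x \<bullet> n) + u * t - c = (1-u) * (x \<bullet> n - c) + u * (t - c)" by (simp add: algebra_simps)
      also have "\<bar>\<dots>\<bar> \<le> (1-u) * \<bar>x \<bullet> n - c\<bar> + u * \<bar>t - c\<bar>"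
        using u by (simp add: abs_triangle_ineq[THEN order_trans] abs_mult)
      also have "\<dots> < \<epsilon>" using x t u by (intro convex_bound_lt) (auto simp: N_def)
      finally show ?thesis .
    qed
    then have "z \<in> N" using x prsh z zn by (auto simp: N_def)
    moreover have "P (z \<bullet> n) (h z)" using zn z hsh Pc[OF x(2) Pt u(1,2)] by simp
    ultimately show "z \<in> {z \<in> N. P (z \<bullet> n) (h z)}" by blast
  qed
  have slabne: "N \<inter> {x. x \<bullet> n = t} \<noteq> {}" if "\<bar>t - c\<bar> < \<epsilon>" for t
  proof -
    have "p + (t - c) *\<^sub>R n \<in> N \<inter> {x. x \<bullet> n = t}"
      using that prsh \<delta> by (simp add: N_def inner_add_left nn c_def)
    then show ?thesis by blast
  qed
  have c1: "connected (N - closure B)"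
    unfolding Nplus
  proof (rule conn_lemma[OF convslab slabne[of "c + 3*\<epsilon>/4"]])
    show "\<bar>c + 3 * \<epsilon> / 4 - c\<bar> < \<epsilon>" using \<epsilon> by simp
    show "N \<inter> {x. x \<bullet> n = c + 3 * \<epsilon> / 4} \<subseteq> {x \<in> N. h x < x \<bullet> n}"
    proof
      fix x assume x: "x \<in> N \<inter> {x. x \<bullet> n = c + 3 * \<epsilon> / 4}"
      then show "x \<in> {x \<in> N. h x < x \<bullet> n}" using hN[of x] by (auto simp: abs_if split: if_splits)
    qed
    show "\<forall>x\<in>{x \<in> N. h x < x \<bullet> n}. \<exists>y\<in>N \<inter> {x. x \<bullet> n = c + 3 * \<epsilon> / 4}. closed_segment x y \<subseteq> {x \<in> N. h x < x \<bullet> n}"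
    proof
      fix x assume x: "x \<in> {x \<in> N. h x < x \<bullet> n}"
      let ?t = "c + 3 * \<epsilon> / 4"
      have "closed_segment x (x + (?t - x \<bullet> n) *\<^sub>R n) \<subseteq> {z \<in> N. (\<lambda>a b. b < a) (z \<bullet> n) (h z)}"
      proof (rule vert)
        show "(\<lambda>a b. b < a) ?t (h x)" using hN[of x] x by (auto simp: abs_if split: if_splits)
        show "\<And>a b w u. w < a \<Longrightarrow> w < b \<Longrightarrow> 0 \<le> (u::real) \<Longrightarrow> u \<le> 1 \<Longrightarrow> w < (1-u)*a + u*b"
          by (rule cvx_gt)
      qed (use x \<epsilon> in auto)
      moreover have "x + (?t - x \<bullet> n) *\<^sub>R n \<in> N \<inter> {x. x \<bullet> n = ?t}"
        using x prsh \<epsilon> by (auto simp: N_def inner_add_left nn)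
      ultimately show "\<exists>y\<in>N \<inter> {x. x \<bullet> n = ?t}. closed_segment x y \<subseteq> {x \<in> N. h x < x \<bullet> n}" by auto
    qed
  qed
  have c2: "connected (N \<inter> B)"
    unfolding Nminus
  proof (rule conn_lemma[OF convslab slabne[of "c - 3*\<epsilon>/4"]])
    show "\<bar>c - 3 * \<epsilon> / 4 - c\<bar> < \<epsilon>" using \<epsilon> by simp
    show "N \<inter> {x. x \<bullet> n = c - 3 * \<epsilon> / 4} \<subseteq> {x \<in> N. x \<bullet> n < h x}"
    proof
      fix x assume x: "x \<in> N \<inter> {x. x \<bullet> n = c - 3 * \<epsilon> / 4}"
      then show "x \<in> {x \<in> N. x \<bullet> n < h x}" using hN[of x] by (auto simp: abs_if split: if_splits)
    qed
    show "\<forall>x\<in>{x \<in> N. x \<bullet> n < h x}. \<exists>y\<in>N \<inter> {x. x \<bullet> n = c - 3 * \<epsilon> / 4}. closed_segment x y \<subseteq> {x \<in> N. x \<bullet> n < h x}"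
    proof
      fix x assume x: "x \<in> {x \<in> N. x \<bullet> n < h x}"
      let ?t = "c - 3 * \<epsilon> / 4"
      have "closed_segment x (x + (?t - x \<bullet> n) *\<^sub>R n) \<subseteq> {z \<in> N. (\<lambda>a b. a < b) (z \<bullet> n) (h z)}"
      proof (rule vert)
        show "(\<lambda>a b. a < b) ?t (h x)" using hN[of x] x by (auto simp: abs_if split: if_splits)
        show "\<And>a b w u. a < w \<Longrightarrow> b < w \<Longrightarrow> 0 \<le> (u::real) \<Longrightarrow> u \<le> 1 \<Longrightarrow> (1-u)*a + u*b < w"
          by (rule cvx_lt)
      qed (use x \<epsilon> in auto)
      moreover have "x + (?t - x \<bullet> n) *\<^sub>R n \<in> N \<inter> {x. x \<bullet> n = ?t}"
        using x prsh \<epsilon> by (auto simp: N_def inner_add_left nn)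
      ultimately show "\<exists>y\<in>N \<inter> {x. x \<bullet> n = ?t}. closed_segment x y \<subseteq> {x \<in> N. x \<bullet> n < h x}" by auto
    qed
  qed
  have c3: "N \<inter> frontier B \<subseteq> closure (N - closure B)"
  proof
    fix q assume q: "q \<in> N \<inter> frontier B"
    have qnB: "q \<notin> B" using q oB by (simp add: frontier_def interior_open)
    then have qge: "h q \<le> q \<bullet> n" using BU NsubU q by force
    show "q \<in> closure (N - closure B)" unfolding closure_approachable Nplus
    proof (intro allI impI)
      fix e :: real assume e: "e > 0"
      obtain r' where r': "r' > 0" "ball q r' \<subseteq> N" using openE[OF oN, of q] q by blast
      define t where "t = min e r' / 2"
      have t: "t > 0" "t < e" "t < r'" using e r' by (auto simp: t_def)
      define y where "y = q + t *\<^sub>R n"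
      have dy: "dist y q = t" using t n1 by (simp add: y_def dist_norm)
      have "y \<in> N" using r' t dy by (auto simp: dist_commute)
      moreover have "h y < y \<bullet> n" using qge t by (simp add: y_def hsh inner_add_left nn)
      ultimately show "\<exists>y\<in>{x \<in> N. h x < x \<bullet> n}. dist y q < e" using dy t by auto
    qed
  qed
  show ?thesis using oN pN NsubA c1 c2 c3 by blast
qed


theorem lemma6:
  fixes A B :: "'a::euclidean_space set"
  assumes "open A" and "connected A"
    and "open B" and "bounded B" and "C1_boundary B"
    and "frontier B \<subseteq> A"
    and "\<forall>x\<in>B. connected (frontier (connected_component_set B x))"
  shows "connected (A - closure B)"
proof (rule ccontr)
  note oA = assms(1) and cA = assms(2) and oB = assms(3) and bB = assms(4) and cb = assms(5)
    and fA = assms(6) and fc = assms(7)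
  define E where "E = A - closure B"
  assume "\<not> connected (A - closure B)"
  then obtain U1 U2 where oU1: "open U1" and oU2: "open U2" and cov: "E \<subseteq> U1 \<union> U2"
    and dis: "U1 \<inter> U2 \<inter> E = {}" and ne1: "U1 \<inter> E \<noteq> {}" and ne2: "U2 \<inter> E \<noteq> {}"
    unfolding connected_def E_def by blast
  define P1 where "P1 = U1 \<inter> E"
  define P2 where "P2 = U2 \<inter> E"
  have oE: "open E" unfolding E_def using oA by (simp add: open_Diff)
  have oP1: "open P1" and oP2: "open P2" using oE oU1 oU2 by (auto simp: P1_def P2_def)
  have P12: "P1 \<inter> P2 = {}" using dis by (auto simp: P1_def P2_def)
  have EP: "E = P1 \<union> P2" using cov by (auto simp: P1_def P2_def)
  have K: "T \<subseteq> P1 \<or> T \<subseteq> P2" if "connected T" "T \<subseteq> E" for T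
    using connectedD[OF that(1) oU1 oU2] that(2) dis cov by (auto simp: P1_def P2_def)
  have loc: "\<exists>N. open N \<and> p \<in> N \<and> N \<subseteq> A \<and> connected (N - closure B) \<and> connected (N \<inter> B)
           \<and> N \<inter> frontier B \<subseteq> closure (N - closure B)" if "p \<in> frontier B" for p
    using local_nbhd[OF oB cb that oA] fA that by blast
  define S1 where "S1 = frontier B \<inter> closure P1"
  define S2 where "S2 = frontier B \<inter> closure P2"
  have cS1: "closed S1" and cS2: "closed S2" unfolding S1_def S2_def
    by (simp_all add: closed_Int)
  have meet: "N \<inter> P \<noteq> {}" if "open N" "p \<in> N" "p \<in> closure P" for N P p
    using open_Int_closure_eq_empty[OF that(1), of P] that(2,3) by blast
  have S12: "S1 \<inter> S2 = {}"
  proof (rule ccontr)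
    assume "S1 \<inter> S2 \<noteq> {}"
    then obtain p where p1: "p \<in> S1" and p2: "p \<in> S2" by blast
    then have pf: "p \<in> frontier B" by (simp add: S1_def)
    obtain N where N: "open N" "p \<in> N" "N \<subseteq> A" "connected (N - closure B)" by (metis loc[OF pf])
    have TE: "N - closure B \<subseteq> E" using N(3) by (auto simp: E_def)
    have "N \<inter> P1 \<noteq> {}" using meet[OF N(1,2)] p1 by (simp add: S1_def)
    moreover have "N \<inter> P2 \<noteq> {}" using meet[OF N(1,2)] p2 by (simp add: S2_def)
    moreover have "P1 \<subseteq> E" "P2 \<subseteq> E" by (auto simp: P1_def P2_def)
    ultimately have "(N - closure B) \<inter> P1 \<noteq> {}" "(N - closure B) \<inter> P2 \<noteq> {}"
      unfolding E_def by blast+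
    then show False using K[OF N(4) TE] P12 by blast
  qed
  have fS: "frontier B \<subseteq> S1 \<union> S2"
  proof
    fix p assume pf: "p \<in> frontier B"
    obtain N where N: "open N" "p \<in> N" "N \<subseteq> A" "N \<inter> frontier B \<subseteq> closure (N - closure B)"
      by (metis loc[OF pf])
    have "p \<in> closure (N - closure B)" using N pf by blast
    also have "\<dots> \<subseteq> closure E" using N(3) by (intro closure_mono) (auto simp: E_def)
    also have "\<dots> = closure P1 \<union> closure P2" by (simp add: EP closure_Un)
    finally show "p \<in> S1 \<union> S2" using pf by (auto simp: S1_def S2_def)
  qed
  define F where "F x = frontier (connected_component_set B x)" for x
  have Fsub: "F x \<subseteq> frontier B" for x unfolding F_def by (rule frontier_of_connected_component_subset)
  have Fne: "F x \<noteq> {}" if "x \<in> B" for x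
  proof
    assume "F x = {}"
    then have "connected_component_set B x = {} \<or> connected_component_set B x = UNIV"
      unfolding F_def frontier_eq_empty .
    moreover have "x \<in> connected_component_set B x" using that by simp
    moreover have "bounded (connected_component_set B x)"
      using bB bounded_subset connected_component_subset by blast
    ultimately show False by (metis empty_iff not_bounded_UNIV)
  qed
  have F12: "F x \<subseteq> S1 \<or> F x \<subseteq> S2" if "x \<in> B" for x
  proof -
    have "connected (F x)" using fc that by (simp add: F_def)
    from connected_closedD[OF this _ _ cS1 cS2] S12 fS Fsub[of x]
    have "S1 \<inter> F x = {} \<or> S2 \<inter> F x = {}" by blast
    then show ?thesis using fS Fsub[of x] by blast
  qed
  define W1 where "W1 = P1 \<union> S1 \<union> {x \<in> B. F x \<subseteq> S1}"
  define W2 where "W2 = P2 \<union> S2 \<union> {x \<in> B. F x \<subseteq> S2}"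
  have Wopen: "open (A \<inter> (P \<union> S \<union> {x \<in> B. F x \<subseteq> S}))"
    if PS: "P = P1 \<and> S = S1 \<and> Q = P2 \<and> R = S2 \<or> P = P2 \<and> S = S2 \<and> Q = P1 \<and> R = S1" for P S Q R
  proof -
    have oP: "open P" using PS oP1 oP2 by blast
    have PQ: "P \<inter> Q = {}" using PS P12 by blast
    have SR: "S \<inter> R = {}" using PS S12 by blast
    have SP: "S = frontier B \<inter> closure P" using PS by (auto simp: S1_def S2_def)
    have RQ: "R = frontier B \<inter> closure Q" using PS by (auto simp: S1_def S2_def)
    have EPQ: "E = P \<union> Q" using PS EP by auto
    have KK: "T \<subseteq> P \<or> T \<subseteq> Q" if "connected T" "T \<subseteq> E" for T using K[OF that] PS by blast
    have FF: "F x \<subseteq> S \<or> F x \<subseteq> R" if "x \<in> B" for x using F12[OF that] PS by blast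
    show ?thesis unfolding open_subopen[of "A \<inter> (P \<union> S \<union> {x \<in> B. F x \<subseteq> S})"]
    proof
      fix x assume x: "x \<in> A \<inter> (P \<union> S \<union> {x \<in> B. F x \<subseteq> S})"
      show "\<exists>T. open T \<and> x \<in> T \<and> T \<subseteq> A \<inter> (P \<union> S \<union> {x \<in> B. F x \<subseteq> S})"
      proof (cases "x \<in> P")
        case True
        have "P \<subseteq> A" using PS by (auto simp: P1_def P2_def E_def)
        then show ?thesis using True oP by blast
      next
        case xnP: False
        show ?thesis
        proof (cases "x \<in> S")
          case xS: True
          then have pf: "x \<in> frontier B" using SP by blast
          obtain N where N: "open N" "x \<in> N" "N \<subseteq> A" "connected (N - closure B)" "connected (N \<inter> B)"
            "N \<inter> frontier B \<subseteq> closure (N - closure B)" by (metis loc[OF pf])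
          have TE: "N - closure B \<subseteq> E" using N(3) by (auto simp: E_def)
          have "N \<inter> P \<noteq> {}" using meet[OF N(1,2)] xS SP by blast
          then have "(N - closure B) \<inter> P \<noteq> {}" using PS by (auto simp: P1_def P2_def E_def)
          then have TP: "N - closure B \<subseteq> P" using KK[OF N(4) TE] PQ by blast
          have "N \<subseteq> P \<union> S \<union> {x \<in> B. F x \<subseteq> S}"
          proof
            fix y assume y: "y \<in> N"
            consider "y \<notin> closure B" | "y \<in> frontier B" | "y \<in> B"
              using oB by (auto simp: frontier_def interior_open)
            then show "y \<in> P \<union> S \<union> {x \<in> B. F x \<subseteq> S}"
            proof cases
              case 1 then show ?thesis using TP y by blast
            next
              case 2
              then have "y \<in> closure (N - closure B)" using N(6) y by blast
              then have "y \<in> closure P" using TP closure_mono by blast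
              then show ?thesis using 2 SP by blast
            next
              case 3
              have sub: "N \<inter> B \<subseteq> connected_component_set B y"
                using 3 y N(5) by (intro connected_component_maximal) auto
              have "x \<in> N \<inter> closure B" using N(2) pf by (simp add: frontier_def)
              then have "x \<in> closure (N \<inter> B)" using open_Int_closure_subset[OF N(1)] by blast
              then have "x \<in> closure (connected_component_set B y)" using sub closure_mono by blast
              moreover have "x \<notin> connected_component_set B y"
                using pf oB connected_component_subset by (fastforce simp: frontier_def interior_open)
              moreover have "interior (connected_component_set B y) = connected_component_set B y"
                using oB open_connected_component interior_open by blast
              ultimately have "x \<in> F y" by (simp add: F_def frontier_def)
              then have "F y \<inter> S \<noteq> {}" using xS by blast
              then have "F y \<subseteq> S" using FF[OF 3] SR by blast
              then show ?thesis using 3 by blast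
            qed
          qed
          then show ?thesis using N by blast
        next
          case xnS: False
          then have xB: "x \<in> B" "F x \<subseteq> S" "x \<in> A" using x xnP by auto
          let ?C = "A \<inter> connected_component_set B x"
          have "open ?C" using oA oB open_connected_component by blast
          moreover have "?C \<subseteq> A \<inter> (P \<union> S \<union> {x \<in> B. F x \<subseteq> S})"
          proof
            fix y assume y: "y \<in> ?C"
            then have "connected_component_set B y = connected_component_set B x"
              using connected_component_eq by blast
            then have "F y = F x" by (simp add: F_def)
            moreover have "y \<in> B" using y connected_component_subset by blast
            ultimately show "y \<in> A \<inter> (P \<union> S \<union> {x \<in> B. F x \<subseteq> S})" using xB y by auto
          qed
          moreover have "x \<in> ?C" using xB by simp
          ultimately show ?thesis by blast
        qed
      qed
    qed
  qed
  have oV1: "open (A \<inter> W1)" unfolding W1_def using Wopen by blast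
  have oV2: "open (A \<inter> W2)" unfolding W2_def using Wopen by blast
  have covA: "A \<subseteq> (A \<inter> W1) \<union> (A \<inter> W2)"
  proof
    fix x assume xA: "x \<in> A"
    consider "x \<notin> closure B" | "x \<in> frontier B" | "x \<in> B"
      using oB by (auto simp: frontier_def interior_open)
    then show "x \<in> (A \<inter> W1) \<union> (A \<inter> W2)"
    proof cases
      case 1 then have "x \<in> E" using xA by (simp add: E_def)
      then show ?thesis using EP xA by (auto simp: W1_def W2_def)
    next
      case 2 then show ?thesis using fS xA by (auto simp: W1_def W2_def)
    next
      case 3 then show ?thesis using F12[OF 3] xA by (auto simp: W1_def W2_def)
    qed
  qed
  have disj: "(A \<inter> W1) \<inter> (A \<inter> W2) \<inter> A = {}"
  proof -
    have "P1 \<union> P2 \<subseteq> E" using EP by blast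
    moreover have "S1 \<union> S2 \<subseteq> frontier B" by (auto simp: S1_def S2_def)
    moreover have "E \<inter> closure B = {}" by (auto simp: E_def)
    moreover have "frontier B \<inter> B = {}" using oB by (auto simp: frontier_def interior_open)
    moreover have "frontier B \<subseteq> closure B" by (auto simp: frontier_def)
    moreover have "B \<subseteq> closure B" by (rule closure_subset)
    moreover have "\<not> (F x \<subseteq> S1 \<and> F x \<subseteq> S2)" if "x \<in> B" for x using Fne[OF that] S12 by blast
    ultimately show ?thesis unfolding W1_def W2_def using P12 S12 by blast
  qed
  have "A \<inter> W1 \<inter> A \<noteq> {}" using ne1 by (auto simp: W1_def P1_def E_def)
  moreover have "A \<inter> W2 \<inter> A \<noteq> {}" using ne2 by (auto simp: W2_def P2_def E_def)
  ultimately show False using connectedD[OF cA oV1 oV2 disj covA] by blast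
qed

end
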